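(* Let $n\ge 2$, $m\ge1$, $\delta>0$, and $0<k<n$ an integer. Then \[ R_k(\delta) \leq (1 - \rho_k^2)^{-m(m+1)/4} \exp\left(|\rho_k|\, m\,\delta^2\right). \]
   Context: An $m\times m$ GOE matrix is a random symmetric matrix whose entries on and above the diagonal are independent centered normal variables, with variance $2$ on the diagonal and variance $1$ off the diagonal. Two GOE matrices $X,Y$ have correlation $\rho\in(-1,1)$ if the pairs $(X_{ij},Y_{ij})$, $i\le j$, are independent across index pairs, each jointly normal with $\mathrm{corr}(X_{ij},Y_{ij})=\rho$. Let $\rho_k = 1-2k/n$ and \[R_k(\delta) = \frac{\mathbb{P}(\|X_k\| \leq \delta,\ \|Y_k\| \leq \delta)}{\mathbb{P}(\|X\| \leq \delta)^2},\] where $X$ is an $m\times m$ GOE matrix and $X_k,Y_k$ are $m\times m$ GOE matrices with correlation $\rho_k$; $\|\cdot\|$ is the spectral norm. *)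

theory Defs
  imports "HOL-Probability.Probability"
begin

text \<open>Index set of the independent entries of an m x m symmetric matrix
  (m = CARD('m)): unordered pairs {i,j}, i.e. the pairs i \<le> j.\<close>
definition sym_pairs :: "'m::finite set set" where
  "sym_pairs = {{i, j} | i j. True}"

text \<open>Variance of a GOE entry: 2 on the diagonal ({i,i} is a singleton), 1 off it.\<close>
definition goe_var :: "'m set \<Rightarrow> real" where
  "goe_var p = (if card p = 1 then 2 else 1)"

definition sym_mat :: "('m::finite set \<Rightarrow> real) \<Rightarrow> real^'m^'m" where
  "sym_mat g = (\<chi> i j. g {i, j})"

definition spec_norm :: "real^'m^'m \<Rightarrow> real" where
  "spec_norm A = onorm (\<lambda>x. A *v x)"

definition goe_law :: "('m::finite set \<Rightarrow> real) measure" where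
  "goe_law = PiM sym_pairs (\<lambda>p. density lborel (normal_density 0 (sqrt (goe_var p))))"

definition bvn_density :: "real \<Rightarrow> real \<Rightarrow> real \<times> real \<Rightarrow> real" where
  "bvn_density s2 r = (\<lambda>(x, y). exp (- (x\<^sup>2 - 2 * r * x * y + y\<^sup>2) / (2 * s2 * (1 - r\<^sup>2)))
      / (2 * pi * s2 * sqrt (1 - r\<^sup>2)))"

text \<open>Joint law of the entries of two GOE matrices with correlation r:
  the entry pairs (X_ij, Y_ij) are independent over {i,j}, each jointly normal.\<close>
definition corr_goe_law :: "real \<Rightarrow> ('m::finite set \<Rightarrow> real \<times> real) measure" where
  "corr_goe_law r = PiM sym_pairs (\<lambda>p. density lborel (bvn_density (goe_var p) r))"

definition rho :: "nat \<Rightarrow> nat \<Rightarrow> real" where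
  "rho n k = 1 - 2 * real k / real n"

definition R_ratio :: "'m::finite itself \<Rightarrow> nat \<Rightarrow> nat \<Rightarrow> real \<Rightarrow> real" where
  "R_ratio _ n k \<delta> =
     measure (corr_goe_law (rho n k) :: ('m set \<Rightarrow> real \<times> real) measure)
       {g \<in> space (corr_goe_law (rho n k)).
          spec_norm (sym_mat (fst \<circ> g)) \<le> \<delta> \<and> spec_norm (sym_mat (snd \<circ> g)) \<le> \<delta>}
     / (measure (goe_law :: ('m set \<Rightarrow> real) measure)
          {g \<in> space goe_law. spec_norm (sym_mat g) \<le> \<delta>})\<^sup>2"

end

theory Submission
  imports Defs
begin


lemma PiM_density:
  fixes M :: "'i \<Rightarrow> 'a measure" and f :: "'i \<Rightarrow> 'a \<Rightarrow> ennreal"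
  assumes I: "finite I"
    and sf: "\<And>i. sigma_finite_measure (M i)"
    and sfd: "\<And>i. sigma_finite_measure (density (M i) (f i))"
    and fm: "\<And>i. f i \<in> borel_measurable (M i)"
  shows "PiM I (\<lambda>i. density (M i) (f i)) = density (PiM I M) (\<lambda>x. \<Prod>i\<in>I. f i (x i))"
proof -
  interpret D: product_sigma_finite "\<lambda>i. density (M i) (f i)"
    by (simp add: product_sigma_finite_def sfd)
  interpret P: product_sigma_finite M
    by (simp add: product_sigma_finite_def sf)
  have Fm: "(\<lambda>x. \<Prod>i\<in>I. f i (x i)) \<in> borel_measurable (PiM I M)"
  proof (rule borel_measurable_prod_ennreal)
    fix i assume i: "i \<in> I"
    show "(\<lambda>x. f i (x i)) \<in> borel_measurable (PiM I M)"
      by (rule measurable_compose[OF measurable_component_singleton[OF i] fm])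
  qed
  have "density (PiM I M) (\<lambda>x. \<Prod>i\<in>I. f i (x i)) = PiM I (\<lambda>i. density (M i) (f i))"
  proof (rule D.PiM_eqI[OF I])
    show "sets (density (PiM I M) (\<lambda>x. \<Prod>i\<in>I. f i (x i))) = sets (PiM I (\<lambda>i. density (M i) (f i)))"
      by (simp only: sets_density) (rule sets_PiM_cong; simp)
  next
    fix A assume A: "\<And>i. i \<in> I \<Longrightarrow> A i \<in> sets (density (M i) (f i))"
    then have A': "\<And>i. i \<in> I \<Longrightarrow> A i \<in> sets (M i)" by simp
    have PA: "Pi\<^sub>E I A \<in> sets (PiM I M)" using A' by (auto intro: sets_PiM_I_finite[OF I])
    have "emeasure (density (PiM I M) (\<lambda>x. \<Prod>i\<in>I. f i (x i))) (Pi\<^sub>E I A)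
        = (\<integral>\<^sup>+ x. (\<Prod>i\<in>I. f i (x i)) * indicator (Pi\<^sub>E I A) x \<partial>PiM I M)"
      by (rule emeasure_density[OF Fm PA])
    also have "\<dots> = (\<integral>\<^sup>+ x. (\<Prod>i\<in>I. f i (x i) * indicator (A i) (x i)) \<partial>PiM I M)"
    proof (rule nn_integral_cong)
      fix x assume x: "x \<in> space (PiM I M)"
      have "indicator (Pi\<^sub>E I A) x = (\<Prod>i\<in>I. indicator (A i) (x i) :: ennreal)"
      proof (cases "x \<in> Pi\<^sub>E I A")
        case True then show ?thesis by (simp add: PiE_iff)
      next
        case False
        then obtain j where "j \<in> I" "x j \<notin> A j" using x by (auto simp: space_PiM PiE_iff)
        then have "(\<Prod>i\<in>I. indicator (A i) (x i) :: ennreal) = 0"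
          using I by (intro prod_zero) (auto intro!: bexI[of _ j])
        then show ?thesis using False by simp
      qed
      then show "(\<Prod>i\<in>I. f i (x i)) * indicator (Pi\<^sub>E I A) x = (\<Prod>i\<in>I. f i (x i) * indicator (A i) (x i))"
        by (simp add: prod.distrib)
    qed
    also have "\<dots> = (\<Prod>i\<in>I. \<integral>\<^sup>+ y. f i y * indicator (A i) y \<partial>M i)"
      by (rule P.product_nn_integral_prod[OF I], rule borel_measurable_times_ennreal[OF fm borel_measurable_indicator[OF A']])
    also have "\<dots> = (\<Prod>i\<in>I. emeasure (density (M i) (f i)) (A i))"
      by (rule prod.cong[OF refl], rule emeasure_density[OF fm A', symmetric])
    finally show "emeasure (density (PiM I M) (\<lambda>x. \<Prod>i\<in>I. f i (x i))) (Pi\<^sub>E I A)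
        = (\<Prod>i\<in>I. emeasure (density (M i) (f i)) (A i))" .
  qed
  then show ?thesis by simp
qed



lemma PiM_pair_split:
  fixes M :: "'i \<Rightarrow> 'a measure" and N :: "'i \<Rightarrow> 'b measure"
  assumes I: "finite I" and PM: "\<And>i. prob_space (M i)" and PN: "\<And>i. prob_space (N i)"
  shows "distr (PiM I (\<lambda>i. M i \<Otimes>\<^sub>M N i)) (PiM I M \<Otimes>\<^sub>M PiM I N)
           (\<lambda>g. (\<lambda>i\<in>I. fst (g i), \<lambda>i\<in>I. snd (g i))) = PiM I M \<Otimes>\<^sub>M PiM I N"
    (is "distr ?L ?R ?T = ?R")
proof -
  have PMN: "\<And>i. prob_space (M i \<Otimes>\<^sub>M N i)" using PM PN by (rule prob_space_pair)
  interpret L: product_sigma_finite "\<lambda>i. M i \<Otimes>\<^sub>M N i"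
    unfolding product_sigma_finite_def using PMN by (simp add: prob_space_imp_sigma_finite)
  interpret PM: product_sigma_finite M
    unfolding product_sigma_finite_def using PM by (simp add: prob_space_imp_sigma_finite)
  interpret PN: product_sigma_finite N
    unfolding product_sigma_finite_def using PN by (simp add: prob_space_imp_sigma_finite)
  have pPM: "prob_space (PiM I M)" using PM by (rule prob_space_PiM)
  have pPN: "prob_space (PiM I N)" using PN by (rule prob_space_PiM)
  have pR: "prob_space ?R" using pPM pPN by (rule prob_space_pair)
  interpret SN: sigma_finite_measure "PiM I N" using pPN by (rule prob_space_imp_sigma_finite)
  have Tm: "?T \<in> measurable ?L ?R"
  proof (rule measurable_Pair)
    show "(\<lambda>g. \<lambda>i\<in>I. fst (g i)) \<in> measurable ?L (PiM I M)"
      by (rule measurable_restrict, rule measurable_compose[OF _ measurable_fst], erule measurable_component_singleton)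
    show "(\<lambda>g. \<lambda>i\<in>I. snd (g i)) \<in> measurable ?L (PiM I N)"
      by (rule measurable_restrict, rule measurable_compose[OF _ measurable_snd], erule measurable_component_singleton)
  qed
  define E where "E = {a \<times> b | a b. a \<in> prod_algebra I M \<and> b \<in> prod_algebra I N}"
  define \<Omega> where "\<Omega> = space (PiM I M) \<times> space (PiM I N)"
  have spM: "space (PiM I M) \<in> prod_algebra I M"
    unfolding space_PiM using I by (intro prod_algebraI_finite) auto
  have spN: "space (PiM I N) \<in> prod_algebra I N"
    unfolding space_PiM using I by (intro prod_algebraI_finite) auto
  have EPow: "E \<subseteq> Pow \<Omega>"
    unfolding E_def \<Omega>_def space_PiM using prod_algebra_sets_into_space[of I M] prod_algebra_sets_into_space[of I N]
    by blast
  have setsR: "sets ?R = sigma_sets \<Omega> E"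
  proof -
    have "sets ?R = sets (sigma (space (PiM I M) \<times> space (PiM I N)) E)"
      unfolding E_def
    proof (rule sets_pair_eq)
      show "prod_algebra I M \<subseteq> Pow (space (PiM I M))"
        using prod_algebra_sets_into_space[of I M] by (simp add: space_PiM)
      show "sets (PiM I M) = sigma_sets (space (PiM I M)) (prod_algebra I M)"
        by (simp add: sets_PiM space_PiM)
      show "countable {space (PiM I M)}" by simp
      show "{space (PiM I M)} \<subseteq> prod_algebra I M" using spM by simp
      show "\<Union>{space (PiM I M)} = space (PiM I M)" by simp
      show "prod_algebra I N \<subseteq> Pow (space (PiM I N))"
        using prod_algebra_sets_into_space[of I N] by (simp add: space_PiM)
      show "sets (PiM I N) = sigma_sets (space (PiM I N)) (prod_algebra I N)"
        by (simp add: sets_PiM space_PiM)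
      show "countable {space (PiM I N)}" by simp
      show "{space (PiM I N)} \<subseteq> prod_algebra I N" using spN by simp
      show "\<Union>{space (PiM I N)} = space (PiM I N)" by simp
    qed
    also have "\<dots> = sigma_sets \<Omega> E"
      using EPow unfolding \<Omega>_def by (simp add: sets_measure_of)
    finally show ?thesis .
  qed
  have "?R = distr ?L ?R ?T"
  proof (rule measure_eqI_generator_eq[of E \<Omega> ?R "distr ?L ?R ?T" "\<lambda>_. \<Omega>"])
    show "Int_stable E"
    proof (rule Int_stableI)
      fix X Y assume "X \<in> E" "Y \<in> E"
      then obtain a b c d where X: "X = a \<times> b" "a \<in> prod_algebra I M" "b \<in> prod_algebra I N"
        and Y: "Y = c \<times> d" "c \<in> prod_algebra I M" "d \<in> prod_algebra I N"
        unfolding E_def by auto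
      have "a \<inter> c \<in> prod_algebra I M" using X Y Int_stable_prod_algebra[of I M]
        by (auto simp: Int_stable_def)
      moreover have "b \<inter> d \<in> prod_algebra I N" using X Y Int_stable_prod_algebra[of I N]
        by (auto simp: Int_stable_def)
      moreover have "X \<inter> Y = (a \<inter> c) \<times> (b \<inter> d)" using X Y by auto
      ultimately show "X \<inter> Y \<in> E" unfolding E_def by blast
    qed
    show "E \<subseteq> Pow \<Omega>" by (rule EPow)
    show "sets ?R = sigma_sets \<Omega> E" by (rule setsR)
    show "sets (distr ?L ?R ?T) = sigma_sets \<Omega> E" using setsR by simp
    show "range (\<lambda>_. \<Omega>) \<subseteq> E" unfolding E_def \<Omega>_def using spM spN by auto
    show "(\<Union>i::nat. \<Omega>) = \<Omega>" by simp
    show "\<And>i::nat. emeasure ?R \<Omega> \<noteq> \<infinity>"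
      using prob_space.emeasure_space_1[OF pR] unfolding \<Omega>_def by (simp add: space_pair_measure)
  next
    fix X assume "X \<in> E"
    then obtain a b where X: "X = a \<times> b" and a: "a \<in> prod_algebra I M" and b: "b \<in> prod_algebra I N"
      unfolding E_def by auto
    obtain EA where EA: "a = Pi\<^sub>E I EA" "EA \<in> (\<Pi> i\<in>I. sets (M i))" using a by (rule prod_algebraE_all)
    obtain EB where EB: "b = Pi\<^sub>E I EB" "EB \<in> (\<Pi> i\<in>I. sets (N i))" using b by (rule prod_algebraE_all)
    have EA': "\<And>i. i \<in> I \<Longrightarrow> EA i \<in> sets (M i)" using EA by auto
    have EB': "\<And>i. i \<in> I \<Longrightarrow> EB i \<in> sets (N i)" using EB by auto
    have aS: "a \<in> sets (PiM I M)" using EA' I unfolding EA by (auto intro: sets_PiM_I_finite)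
    have bS: "b \<in> sets (PiM I N)" using EB' I unfolding EB by (auto intro: sets_PiM_I_finite)
    have "emeasure ?R X = emeasure (PiM I M) a * emeasure (PiM I N) b"
      unfolding X by (rule SN.emeasure_pair_measure_Times[OF aS bS])
    also have "\<dots> = (\<Prod>i\<in>I. emeasure (M i) (EA i)) * (\<Prod>i\<in>I. emeasure (N i) (EB i))"
      unfolding EA(1) EB(1) using I EA' EB'
      by (simp add: PM.emeasure_PiM PN.emeasure_PiM)
    also have "\<dots> = (\<Prod>i\<in>I. emeasure (M i \<Otimes>\<^sub>M N i) (EA i \<times> EB i))"
    proof -
      have "\<And>i. i \<in> I \<Longrightarrow> emeasure (M i \<Otimes>\<^sub>M N i) (EA i \<times> EB i) = emeasure (M i) (EA i) * emeasure (N i) (EB i)"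
        using EA' EB' PN by (intro sigma_finite_measure.emeasure_pair_measure_Times) (auto intro: prob_space_imp_sigma_finite)
      then show ?thesis by (simp add: prod.distrib)
    qed
    also have "\<dots> = emeasure ?L (Pi\<^sub>E I (\<lambda>i. EA i \<times> EB i))"
      using I EA' EB' by (simp add: L.emeasure_PiM)
    also have "Pi\<^sub>E I (\<lambda>i. EA i \<times> EB i) = ?T -` X \<inter> space ?L"
    proof -
      have sA: "\<And>i. i \<in> I \<Longrightarrow> EA i \<subseteq> space (M i)" using EA' sets.sets_into_space by blast
      have sB: "\<And>i. i \<in> I \<Longrightarrow> EB i \<subseteq> space (N i)" using EB' sets.sets_into_space by blast
      show ?thesis unfolding X EA(1) EB(1) using sA sB
        by (auto simp: space_PiM PiE_iff space_pair_measure extensional_def mem_Times_iff; blast)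
    qed
    also have "emeasure ?L (?T -` X \<inter> space ?L) = emeasure (distr ?L ?R ?T) X"
      using Tm aS bS unfolding X by (simp add: emeasure_distr)
    finally show "emeasure ?R X = emeasure (distr ?L ?R ?T) X" .
  qed
  then show ?thesis by simp
qed



lemma bvn_bound:
  fixes s2 r x y :: real
  assumes s: "s2 > 0" and r: "\<bar>r\<bar> < 1"
  shows "bvn_density s2 r (x, y) \<le> (1 - r\<^sup>2) powr (-1/2) * exp (\<bar>r\<bar> * (x\<^sup>2 + y\<^sup>2) / (2 * s2))
            * (normal_density 0 (sqrt s2) x * normal_density 0 (sqrt s2) y)"
proof -
  have d: "0 < 1 - r\<^sup>2" using r by (simp add: abs_square_less_1)
  define S where "S = x\<^sup>2 + y\<^sup>2"
  define Q where "Q = x\<^sup>2 - 2 * r * x * y + y\<^sup>2"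
  have sq: "sqrt (2 * pi * s2) * sqrt (2 * pi * s2) = 2 * pi * s2" using s by simp
  have nd: "normal_density 0 (sqrt s2) x * normal_density 0 (sqrt s2) y = exp (- S / (2 * s2)) / (2 * pi * s2)"
  proof -
    have "normal_density 0 (sqrt s2) x * normal_density 0 (sqrt s2) y
        = 1 / (sqrt (2 * pi * s2) * sqrt (2 * pi * s2)) * (exp (- x\<^sup>2 / (2 * s2)) * exp (- y\<^sup>2 / (2 * s2)))"
      using s by (simp add: normal_density_def)
    also have "exp (- x\<^sup>2 / (2 * s2)) * exp (- y\<^sup>2 / (2 * s2)) = exp (- S / (2 * s2))"
      unfolding S_def by (simp add: exp_add[symmetric] diff_divide_distrib)
    finally show ?thesis using sq by simp
  qed
  have c: "(1 - r\<^sup>2) powr (-1/2) = 1 / sqrt (1 - r\<^sup>2)"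
    using d by (simp add: powr_minus_divide powr_half_sqrt)
  have h1: "2 * r * x * y \<le> \<bar>r\<bar> * S"
  proof -
    have "\<bar>2 * x * y\<bar> \<le> S"
    proof -
      have "0 \<le> (\<bar>x\<bar> - \<bar>y\<bar>)\<^sup>2" by simp
      then have "2 * \<bar>x\<bar> * \<bar>y\<bar> \<le> \<bar>x\<bar>\<^sup>2 + \<bar>y\<bar>\<^sup>2" by (simp add: power2_diff)
      then show ?thesis by (simp add: abs_mult S_def)
    qed
    then have "\<bar>r\<bar> * \<bar>2 * x * y\<bar> \<le> \<bar>r\<bar> * S" by (rule mult_left_mono) auto
    moreover have "2 * r * x * y \<le> \<bar>r\<bar> * \<bar>2 * x * y\<bar>"
    proof -
      have "2 * r * x * y = r * (2 * x * y)" by simp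
      also have "\<dots> \<le> \<bar>r * (2 * x * y)\<bar>" by (rule abs_ge_self)
      finally show ?thesis by (simp add: abs_mult)
    qed
    ultimately show ?thesis by linarith
  qed
  have S0: "0 \<le> S" unfolding S_def by simp
  have h2: "(1 - \<bar>r\<bar>) * S * (1 - r\<^sup>2) \<le> Q"
  proof -
    have "(1 - \<bar>r\<bar>) * S * (1 - r\<^sup>2) \<le> (1 - \<bar>r\<bar>) * S * 1"
      by (rule mult_left_mono) (use r S0 in auto)
    moreover have "(1 - \<bar>r\<bar>) * S * 1 = S - \<bar>r\<bar> * S" by (simp add: algebra_simps)
    moreover have "Q = S - 2 * r * x * y" by (simp add: Q_def S_def)
    ultimately show ?thesis using h1 by linarith
  qed
  have key: "- Q / (2 * s2 * (1 - r\<^sup>2)) \<le> \<bar>r\<bar> * S / (2 * s2) + - S / (2 * s2)"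
  proof -
    have "(1 - \<bar>r\<bar>) * S \<le> Q / (1 - r\<^sup>2)" by (simp only: pos_le_divide_eq[OF d]) (rule h2)
    then have "(1 - \<bar>r\<bar>) * S / (2 * s2) \<le> Q / (1 - r\<^sup>2) / (2 * s2)" by (rule divide_right_mono) (use s in auto)
    moreover have "Q / (1 - r\<^sup>2) / (2 * s2) = Q / (2 * s2 * (1 - r\<^sup>2))" by (simp add: mult.commute)
    moreover have "\<bar>r\<bar> * S / (2 * s2) + - S / (2 * s2) = - ((1 - \<bar>r\<bar>) * S / (2 * s2))"
      by (simp add: diff_divide_distrib add_divide_distrib algebra_simps)
    moreover have "- Q / (2 * s2 * (1 - r\<^sup>2)) = - (Q / (2 * s2 * (1 - r\<^sup>2)))" by simp
    ultimately show ?thesis by linarith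
  qed
  have "bvn_density s2 r (x, y) = exp (- Q / (2 * s2 * (1 - r\<^sup>2))) / (2 * pi * s2 * sqrt (1 - r\<^sup>2))"
    unfolding bvn_density_def Q_def by simp
  also have "\<dots> \<le> exp (\<bar>r\<bar> * S / (2 * s2) + - S / (2 * s2)) / (2 * pi * s2 * sqrt (1 - r\<^sup>2))"
    by (rule divide_right_mono) (use key s d in auto)
  also have "\<dots> = (1 - r\<^sup>2) powr (-1/2) * exp (\<bar>r\<bar> * S / (2 * s2)) * (exp (- S / (2 * s2)) / (2 * pi * s2))"
    unfolding c exp_add using s d by (simp add: field_simps)
  finally show ?thesis unfolding nd S_def .
qed



lemma col_norm_le:
  fixes A :: "real^'m^'m"
  shows "norm (column j A) \<le> spec_norm A"
proof -
  have "norm (column j A) = norm (A *v axis j 1)" by (simp add: matrix_vector_mult_basis)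
  also have "\<dots> \<le> onorm (\<lambda>x. A *v x) * norm (axis j (1::real))"
    by (rule onorm[OF matrix_vector_mul_bounded_linear])
  finally show ?thesis by (simp add: spec_norm_def norm_axis_1)
qed

lemma norm_sq_vec: "(norm (v :: real^'n))\<^sup>2 = (\<Sum>i\<in>UNIV. (v $ i)\<^sup>2)"
  unfolding power2_norm_eq_inner inner_vec_def by (simp add: power2_eq_square)

lemma sum_sq_le:
  fixes g :: "'m::finite set \<Rightarrow> real"
  assumes "spec_norm (sym_mat g) \<le> \<delta>"
  shows "(\<Sum>p\<in>sym_pairs. (g p)\<^sup>2) \<le> real CARD('m) * \<delta>\<^sup>2"
proof -
  have colsq: "(\<Sum>i\<in>UNIV. (g {i, j})\<^sup>2) \<le> \<delta>\<^sup>2" for j :: 'm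
  proof -
    have "norm (column j (sym_mat g)) \<le> \<delta>" using col_norm_le[of j "sym_mat g"] assms by linarith
    then have "(norm (column j (sym_mat g)))\<^sup>2 \<le> \<delta>\<^sup>2" by (rule power_mono) simp
    then show ?thesis by (simp add: norm_sq_vec column_def sym_mat_def)
  qed
  have img: "sym_pairs = (\<lambda>(i, j). {i, j}) ` (UNIV \<times> (UNIV :: 'm set))"
    unfolding sym_pairs_def by auto
  have "(\<Sum>p\<in>sym_pairs. (g p)\<^sup>2) \<le> (\<Sum>ij\<in>UNIV \<times> (UNIV :: 'm set). ((\<lambda>p. (g p)\<^sup>2) \<circ> (\<lambda>(i, j). {i, j})) ij)"
    unfolding img by (rule sum_image_le) auto
  also have "\<dots> = (\<Sum>j\<in>UNIV. \<Sum>i\<in>UNIV. (g {i, j})\<^sup>2)"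
  proof -
    have "(\<Sum>ij\<in>UNIV \<times> (UNIV :: 'm set). ((\<lambda>p. (g p)\<^sup>2) \<circ> (\<lambda>(i, j). {i, j})) ij)
        = (\<Sum>(i, j)\<in>UNIV \<times> (UNIV :: 'm set). (g {i, j})\<^sup>2)"
      by (intro sum.cong refl) auto
    also have "\<dots> = (\<Sum>i\<in>UNIV. \<Sum>j\<in>UNIV. (g {i, j})\<^sup>2)"
      by (rule sum.cartesian_product[symmetric])
    also have "\<dots> = (\<Sum>j\<in>UNIV. \<Sum>i\<in>UNIV. (g {i, j})\<^sup>2)"
      by (rule sum.swap)
    finally show ?thesis .
  qed
  also have "\<dots> \<le> (\<Sum>j\<in>(UNIV::'m set). \<delta>\<^sup>2)" by (rule sum_mono) (rule colsq)
  also have "\<dots> = real CARD('m) * \<delta>\<^sup>2" by simp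
  finally show ?thesis .
qed

lemma card_sym_pairs: "2 * card (sym_pairs :: 'm::finite set set) \<le> CARD('m) * (CARD('m) + 1)"
proof -
  let ?m = "CARD('m)"
  have sub: "(sym_pairs :: 'm set set) \<subseteq> {B. B \<subseteq> UNIV \<and> card B = 1} \<union> {B. B \<subseteq> UNIV \<and> card B = 2}"
  proof
    fix B :: "'m set" assume "B \<in> sym_pairs"
    then obtain i j where B: "B = {i, j}" unfolding sym_pairs_def by auto
    show "B \<in> {B. B \<subseteq> UNIV \<and> card B = 1} \<union> {B. B \<subseteq> UNIV \<and> card B = 2}"
    proof (cases "i = j")
      case True then show ?thesis using B by simp
    next
      case False then show ?thesis using B by simp
    qed
  qed
  have "card (sym_pairs :: 'm set set) \<le> card ({B. B \<subseteq> (UNIV::'m set) \<and> card B = 1} \<union> {B. B \<subseteq> UNIV \<and> card B = 2})"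
    by (rule card_mono[OF _ sub]) simp
  also have "\<dots> \<le> card {B. B \<subseteq> (UNIV::'m set) \<and> card B = 1} + card {B. B \<subseteq> (UNIV::'m set) \<and> card B = 2}"
    by (rule card_Un_le)
  also have "\<dots> = (?m choose 1) + (?m choose 2)"
  proof -
    have "card {B. B \<subseteq> (UNIV::'m set) \<and> card B = 1} = ?m choose 1" by (rule n_subsets) simp
    moreover have "card {B. B \<subseteq> (UNIV::'m set) \<and> card B = 2} = ?m choose 2" by (rule n_subsets) simp
    ultimately show ?thesis by simp
  qed
  also have "\<dots> = ?m + ?m * (?m - 1) div 2" by (simp add: choose_two)
  finally have "card (sym_pairs :: 'm set set) \<le> ?m + ?m * (?m - 1) div 2" .
  then have "2 * card (sym_pairs :: 'm set set) \<le> 2 * ?m + 2 * (?m * (?m - 1) div 2)" by linarith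
  also have "\<dots> \<le> 2 * ?m + ?m * (?m - 1)" by simp
  also have "\<dots> = ?m * (?m + 1)"
    by (cases ?m) (simp_all add: algebra_simps)
  finally show ?thesis .
qed



lemma goe_var_ge1: "goe_var p \<ge> 1" by (simp add: goe_var_def)

lemma bvn_nonneg: "\<bar>r\<bar> < 1 \<Longrightarrow> s2 > 0 \<Longrightarrow> 0 \<le> bvn_density s2 r z"
proof -
  assume r: "\<bar>r\<bar> < 1" and s: "s2 > 0"
  have "0 < 1 - r\<^sup>2" using r by (simp add: abs_square_less_1)
  then show ?thesis using s unfolding bvn_density_def by (auto simp: case_prod_beta intro!: divide_nonneg_nonneg)
qed

lemma prod_bound:
  fixes g :: "'m::finite set \<Rightarrow> real \<times> real" and r \<delta> :: real
  assumes r: "\<bar>r\<bar> < 1" and X: "spec_norm (sym_mat (fst \<circ> g)) \<le> \<delta>" and Y: "spec_norm (sym_mat (snd \<circ> g)) \<le> \<delta>"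
  shows "(\<Prod>p\<in>sym_pairs. bvn_density (goe_var p) r (g p))
    \<le> (1 - r\<^sup>2) powr (- real (card (sym_pairs :: 'm set set)) / 2) * exp (\<bar>r\<bar> * real CARD('m) * \<delta>\<^sup>2)
      * (\<Prod>p\<in>sym_pairs. normal_density 0 (sqrt (goe_var p)) (fst (g p)) * normal_density 0 (sqrt (goe_var p)) (snd (g p)))"
proof -
  let ?I = "sym_pairs :: 'm set set"
  define c where "c = (1 - r\<^sup>2) powr (-1/2)"
  define \<phi> where "\<phi> p = normal_density 0 (sqrt (goe_var p)) (fst (g p)) * normal_density 0 (sqrt (goe_var p)) (snd (g p))" for p
  define w where "w p = \<bar>r\<bar> * ((fst (g p))\<^sup>2 + (snd (g p))\<^sup>2) / (2 * goe_var p)" for p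
  have d: "0 < 1 - r\<^sup>2" using r by (simp add: abs_square_less_1)
  have fin: "finite ?I" by simp
  have "(\<Prod>p\<in>?I. bvn_density (goe_var p) r (g p)) \<le> (\<Prod>p\<in>?I. c * exp (w p) * \<phi> p)"
  proof (rule prod_mono, rule conjI)
    fix p assume "p \<in> ?I"
    have s: "goe_var p > 0" using goe_var_ge1[of p] by linarith
    show "0 \<le> bvn_density (goe_var p) r (g p)" by (rule bvn_nonneg[OF r s])
    have "bvn_density (goe_var p) r (g p) = bvn_density (goe_var p) r (fst (g p), snd (g p))" by simp
    also have "\<dots> \<le> c * exp (w p) * \<phi> p"
      unfolding c_def w_def \<phi>_def by (rule bvn_bound[OF s r])
    finally show "bvn_density (goe_var p) r (g p) \<le> c * exp (w p) * \<phi> p" .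
  qed
  also have "\<dots> = c ^ card ?I * exp (sum w ?I) * (\<Prod>p\<in>?I. \<phi> p)"
    by (simp add: prod.distrib exp_sum[OF fin])
  also have "\<dots> \<le> (1 - r\<^sup>2) powr (- real (card ?I) / 2) * exp (\<bar>r\<bar> * real CARD('m) * \<delta>\<^sup>2) * (\<Prod>p\<in>?I. \<phi> p)"
  proof -
    have cpow: "c ^ card ?I = (1 - r\<^sup>2) powr (- real (card ?I) / 2)"
      unfolding c_def using d by (simp add: powr_power)
    have "sum w ?I \<le> (\<Sum>p\<in>?I. \<bar>r\<bar> / 2 * ((fst (g p))\<^sup>2 + (snd (g p))\<^sup>2))"
    proof (rule sum_mono)
      fix p assume "p \<in> ?I"
      have s: "goe_var p \<ge> 1" by (rule goe_var_ge1)
      have "w p \<le> \<bar>r\<bar> * ((fst (g p))\<^sup>2 + (snd (g p))\<^sup>2) / 2"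
        unfolding w_def using s by (intro divide_left_mono) auto
      then show "w p \<le> \<bar>r\<bar> / 2 * ((fst (g p))\<^sup>2 + (snd (g p))\<^sup>2)" by simp
    qed
    also have "\<dots> = \<bar>r\<bar> / 2 * ((\<Sum>p\<in>?I. ((fst \<circ> g) p)\<^sup>2) + (\<Sum>p\<in>?I. ((snd \<circ> g) p)\<^sup>2))"
      by (simp only: sum_distrib_left[symmetric] sum.distrib[symmetric] comp_def)
    also have "\<dots> \<le> \<bar>r\<bar> / 2 * (real CARD('m) * \<delta>\<^sup>2 + real CARD('m) * \<delta>\<^sup>2)"
      using sum_sq_le[OF X] sum_sq_le[OF Y] by (intro mult_left_mono add_mono) auto
    also have "\<dots> = \<bar>r\<bar> * real CARD('m) * \<delta>\<^sup>2" by simp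
    finally have "sum w ?I \<le> \<bar>r\<bar> * real CARD('m) * \<delta>\<^sup>2" .
    then have "exp (sum w ?I) \<le> exp (\<bar>r\<bar> * real CARD('m) * \<delta>\<^sup>2)" by simp
    moreover have "0 \<le> (\<Prod>p\<in>?I. \<phi> p)" unfolding \<phi>_def by (intro prod_nonneg) simp
    moreover have "0 \<le> c ^ card ?I" unfolding c_def by simp
    ultimately show ?thesis unfolding cpow[symmetric] by (intro mult_right_mono mult_left_mono) auto
  qed
  finally show ?thesis unfolding \<phi>_def .
qed



lemma bvn_meas: "(\<lambda>z. ennreal (bvn_density s r z)) \<in> borel_measurable (lborel :: (real \<times> real) measure)"
proof -
  have "(\<lambda>z. bvn_density s r z) \<in> borel_measurable borel"
    by (rule borel_measurable_continuous_onI)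
       (unfold bvn_density_def case_prod_beta divide_inverse, intro continuous_intros)
  then show ?thesis by simp
qed

lemma h_meas: "(\<lambda>z. ennreal (normal_density 0 \<sigma> (fst z) * normal_density 0 \<sigma> (snd z))) \<in> borel_measurable (lborel :: (real \<times> real) measure)"
proof -
  have "(\<lambda>z. normal_density 0 \<sigma> (fst z) * normal_density 0 \<sigma> (snd z)) \<in> borel_measurable borel"
    by (rule borel_measurable_continuous_onI)
       (unfold normal_density_def divide_inverse, intro continuous_intros)
  then show ?thesis by simp
qed

lemma sym_mat_restrict: "sym_mat (restrict f sym_pairs) = sym_mat f"
  unfolding sym_mat_def by (simp add: vec_eq_iff sym_pairs_def) blast



lemma key_emeasure:
  fixes r \<delta> :: real
  assumes r: "\<bar>r\<bar> < 1"
    and AS: "{g \<in> space (goe_law :: ('m::finite set \<Rightarrow> real) measure). spec_norm (sym_mat g) \<le> \<delta>} \<in> sets goe_law"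
    and SS: "{g \<in> space (corr_goe_law r :: ('m set \<Rightarrow> real \<times> real) measure).
               spec_norm (sym_mat (fst \<circ> g)) \<le> \<delta> \<and> spec_norm (sym_mat (snd \<circ> g)) \<le> \<delta>} \<in> sets (corr_goe_law r)"
  shows "emeasure (corr_goe_law r :: ('m set \<Rightarrow> real \<times> real) measure)
             {g \<in> space (corr_goe_law r). spec_norm (sym_mat (fst \<circ> g)) \<le> \<delta> \<and> spec_norm (sym_mat (snd \<circ> g)) \<le> \<delta>}
         \<le> ennreal ((1 - r\<^sup>2) powr (- real (card (sym_pairs :: 'm set set)) / 2) * exp (\<bar>r\<bar> * real CARD('m) * \<delta>\<^sup>2))
           * (emeasure (goe_law :: ('m set \<Rightarrow> real) measure) {g \<in> space goe_law. spec_norm (sym_mat g) \<le> \<delta>}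
              * emeasure (goe_law :: ('m set \<Rightarrow> real) measure) {g \<in> space goe_law. spec_norm (sym_mat g) \<le> \<delta>})"
proof -
  let ?I = "sym_pairs :: 'm set set"
  define P where "P = (goe_law :: ('m set \<Rightarrow> real) measure)"
  define Q where "Q = (corr_goe_law r :: ('m set \<Rightarrow> real \<times> real) measure)"
  define A where "A = {g \<in> space P. spec_norm (sym_mat g) \<le> \<delta>}"
  define S where "S = {g \<in> space Q. spec_norm (sym_mat (fst \<circ> g)) \<le> \<delta> \<and> spec_norm (sym_mat (snd \<circ> g)) \<le> \<delta>}"
  define K where "K = (1 - r\<^sup>2) powr (- real (card ?I) / 2) * exp (\<bar>r\<bar> * real CARD('m) * \<delta>\<^sup>2)"
  define \<phi> where "\<phi> p = normal_density 0 (sqrt (goe_var p))" for p :: "'m set"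
  define bv where "bv p z = ennreal (bvn_density (goe_var p) r z)" for p :: "'m set" and z
  define h where "h p z = ennreal (\<phi> p (fst z) * \<phi> p (snd z))" for p :: "'m set" and z
  define M\<phi> where "M\<phi> p = density lborel (\<lambda>x. ennreal (\<phi> p x))" for p :: "'m set"
  define LB where "LB = PiM ?I (\<lambda>_. lborel :: (real \<times> real) measure)"
  define T where "T = (\<lambda>g :: 'm set \<Rightarrow> real \<times> real. (\<lambda>p\<in>?I. fst (g p), \<lambda>p\<in>?I. snd (g p)))"
  have fin: "finite ?I" by simp
  have K0: "0 \<le> K" unfolding K_def by simp
  have A_sets: "A \<in> sets P" using AS unfolding A_def P_def .
  have S_sets: "S \<in> sets Q" using SS unfolding S_def Q_def .
  have P_def': "P = PiM ?I M\<phi>" unfolding P_def goe_law_def M\<phi>_def \<phi>_def ..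
  have gvpos: "0 < sqrt (goe_var p)" for p :: "'m set" using goe_var_ge1[of p] by simp
  have pM\<phi>: "\<And>p. prob_space (M\<phi> p)" unfolding M\<phi>_def \<phi>_def by (rule prob_space_normal_density) (rule gvpos)
  have bvm: "\<And>p. bv p \<in> borel_measurable lborel" unfolding bv_def by (rule bvn_meas)
  have hm: "\<And>p. h p \<in> borel_measurable lborel" unfolding h_def \<phi>_def by (rule h_meas)
  have sf_lb: "sigma_finite_measure (lborel :: (real \<times> real) measure)" by (rule lborel.sigma_finite_measure_axioms)
  have sf_bv: "\<And>p. sigma_finite_measure (density lborel (bv p))"
    using bvm by (subst sigma_finite_measure.sigma_finite_iff_density_finite[OF sf_lb]) (auto simp: bv_def)
  have sf_h: "\<And>p. sigma_finite_measure (density lborel (h p))"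
    using hm by (subst sigma_finite_measure.sigma_finite_iff_density_finite[OF sf_lb]) (auto simp: h_def gvpos)
  have Q_eq: "Q = density LB (\<lambda>g. \<Prod>p\<in>?I. bv p (g p))"
    unfolding Q_def corr_goe_law_def LB_def bv_def[abs_def]
    by (rule PiM_density[OF fin sf_lb sf_bv[unfolded bv_def] bvm[unfolded bv_def]])
  have H_eq: "PiM ?I (\<lambda>p. density lborel (h p)) = density LB (\<lambda>g. \<Prod>p\<in>?I. h p (g p))"
    unfolding LB_def by (rule PiM_density[OF fin sf_lb sf_h hm])
  have pair_eq: "\<And>p. M\<phi> p \<Otimes>\<^sub>M M\<phi> p = density lborel (h p)"
  proof -
    fix p
    have "M\<phi> p \<Otimes>\<^sub>M M\<phi> p = density (lborel \<Otimes>\<^sub>M lborel) (\<lambda>(x, y). ennreal (\<phi> p x) * ennreal (\<phi> p y))"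
      unfolding M\<phi>_def
      by (rule pair_measure_density) (auto simp: \<phi>_def lborel.sigma_finite_measure_axioms
            intro: prob_space_imp_sigma_finite prob_space_normal_density gvpos)
    also have "\<dots> = density lborel (h p)"
      unfolding lborel_prod h_def
      by (rule arg_cong[where f="density lborel"]) (auto simp: \<phi>_def ennreal_mult)
    finally show "M\<phi> p \<Otimes>\<^sub>M M\<phi> p = density lborel (h p)" .
  qed
  have L_eq: "PiM ?I (\<lambda>p. M\<phi> p \<Otimes>\<^sub>M M\<phi> p) = PiM ?I (\<lambda>p. density lborel (h p))"
    by (rule PiM_cong) (auto simp: pair_eq)
  have split: "distr (PiM ?I (\<lambda>p. M\<phi> p \<Otimes>\<^sub>M M\<phi> p)) (P \<Otimes>\<^sub>M P) T = P \<Otimes>\<^sub>M P"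
    unfolding P_def' T_def by (rule PiM_pair_split[OF fin pM\<phi> pM\<phi>])
  have Tm: "T \<in> measurable (PiM ?I (\<lambda>p. M\<phi> p \<Otimes>\<^sub>M M\<phi> p)) (P \<Otimes>\<^sub>M P)"
    unfolding P_def' T_def
  proof (rule measurable_Pair)
    show "(\<lambda>g. \<lambda>i\<in>?I. fst (g i)) \<in> measurable (PiM ?I (\<lambda>p. M\<phi> p \<Otimes>\<^sub>M M\<phi> p)) (PiM ?I M\<phi>)"
      by (rule measurable_restrict, rule measurable_compose[OF _ measurable_fst], erule measurable_component_singleton)
    show "(\<lambda>g. \<lambda>i\<in>?I. snd (g i)) \<in> measurable (PiM ?I (\<lambda>p. M\<phi> p \<Otimes>\<^sub>M M\<phi> p)) (PiM ?I M\<phi>)"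
      by (rule measurable_restrict, rule measurable_compose[OF _ measurable_snd], erule measurable_component_singleton)
  qed
  have spQ: "space Q = PiE ?I (\<lambda>_. UNIV)" unfolding Q_def corr_goe_law_def by (simp add: space_PiM)
  have spLB: "space LB = PiE ?I (\<lambda>_. UNIV)" unfolding LB_def by (simp add: space_PiM)
  have spL: "space (PiM ?I (\<lambda>p. M\<phi> p \<Otimes>\<^sub>M M\<phi> p)) = PiE ?I (\<lambda>_. UNIV)"
    by (simp add: space_PiM space_pair_measure M\<phi>_def)
  have spP: "space P = PiE ?I (\<lambda>_. UNIV)" unfolding P_def' by (simp add: space_PiM M\<phi>_def)
  have sets_LB: "sets Q = sets LB" unfolding Q_eq by simp
  have S_LB: "S \<in> sets LB" using S_sets sets_LB by simp
  have preimg: "T -` (A \<times> A) \<inter> space (PiM ?I (\<lambda>p. M\<phi> p \<Otimes>\<^sub>M M\<phi> p)) = S"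
  proof -
    have e1: "\<And>g. sym_mat (\<lambda>p\<in>?I. fst (g p)) = sym_mat (fst \<circ> g)"
      using sym_mat_restrict[of "fst \<circ> _"] by (simp add: comp_def)
    have e2: "\<And>g. sym_mat (\<lambda>p\<in>?I. snd (g p)) = sym_mat (snd \<circ> g)"
      using sym_mat_restrict[of "snd \<circ> _"] by (simp add: comp_def)
    show ?thesis unfolding S_def A_def T_def spL spQ spP by (auto simp: e1 e2)
  qed
 have bvPm: "(\<lambda>g. \<Prod>p\<in>?I. bv p (g p)) \<in> borel_measurable LB"
  proof (rule borel_measurable_prod_ennreal)
    fix p assume p: "p \<in> ?I"
    show "(\<lambda>g. bv p (g p)) \<in> borel_measurable LB"
      unfolding LB_def by (rule measurable_compose[OF measurable_component_singleton[OF p] bvm])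
  qed
  have hPm: "(\<lambda>g. \<Prod>p\<in>?I. h p (g p)) \<in> borel_measurable LB"
  proof (rule borel_measurable_prod_ennreal)
    fix p assume p: "p \<in> ?I"
    show "(\<lambda>g. h p (g p)) \<in> borel_measurable LB"
      unfolding LB_def by (rule measurable_compose[OF measurable_component_singleton[OF p] hm])
  qed
  have "emeasure Q S = (\<integral>\<^sup>+ g. (\<Prod>p\<in>?I. bv p (g p)) * indicator S g \<partial>LB)"
    unfolding Q_eq by (rule emeasure_density[OF bvPm S_LB])
  also have "\<dots> \<le> (\<integral>\<^sup>+ g. ennreal K * ((\<Prod>p\<in>?I. h p (g p)) * indicator S g) \<partial>LB)"
  proof (rule nn_integral_mono)
    fix g assume g: "g \<in> space LB"
    show "(\<Prod>p\<in>?I. bv p (g p)) * indicator S g \<le> ennreal K * ((\<Prod>p\<in>?I. h p (g p)) * indicator S g)"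
    proof (cases "g \<in> S")
      case False then show ?thesis by simp
    next
      case True
      then have X: "spec_norm (sym_mat (fst \<circ> g)) \<le> \<delta>" and Y: "spec_norm (sym_mat (snd \<circ> g)) \<le> \<delta>"
        unfolding S_def by auto
      have "(\<Prod>p\<in>?I. bv p (g p)) = ennreal (\<Prod>p\<in>?I. bvn_density (goe_var p) r (g p))"
        unfolding bv_def
        by (rule prod_ennreal) (rule bvn_nonneg[OF r], use goe_var_ge1 in \<open>smt (verit)\<close>)
      also have "\<dots> \<le> ennreal (K * (\<Prod>p\<in>?I. \<phi> p (fst (g p)) * \<phi> p (snd (g p))))"
        unfolding K_def \<phi>_def by (rule ennreal_leI) (rule prod_bound[OF r X Y])
      also have "\<dots> = ennreal K * ennreal (\<Prod>p\<in>?I. \<phi> p (fst (g p)) * \<phi> p (snd (g p)))"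
        by (rule ennreal_mult'[OF K0])
      also have "ennreal (\<Prod>p\<in>?I. \<phi> p (fst (g p)) * \<phi> p (snd (g p))) = (\<Prod>p\<in>?I. h p (g p))"
        unfolding h_def by (rule prod_ennreal[symmetric]) (simp add: \<phi>_def)
      finally show ?thesis using True by simp
    qed
  qed
  also have "\<dots> = ennreal K * (\<integral>\<^sup>+ g. (\<Prod>p\<in>?I. h p (g p)) * indicator S g \<partial>LB)"
    by (rule nn_integral_cmult, rule borel_measurable_times_ennreal[OF hPm borel_measurable_indicator[OF S_LB]])
  also have "(\<integral>\<^sup>+ g. (\<Prod>p\<in>?I. h p (g p)) * indicator S g \<partial>LB) = emeasure (density LB (\<lambda>g. \<Prod>p\<in>?I. h p (g p))) S"
    by (rule emeasure_density[OF hPm S_LB, symmetric])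
  also have "\<dots> = emeasure (PiM ?I (\<lambda>p. M\<phi> p \<Otimes>\<^sub>M M\<phi> p)) S"
    unfolding L_eq H_eq ..
  also have "\<dots> = emeasure (distr (PiM ?I (\<lambda>p. M\<phi> p \<Otimes>\<^sub>M M\<phi> p)) (P \<Otimes>\<^sub>M P) T) (A \<times> A)"
    by (subst emeasure_distr[OF Tm]) (auto simp: preimg A_sets)
  also have "\<dots> = emeasure P A * emeasure P A"
    unfolding split
    by (rule sigma_finite_measure.emeasure_pair_measure_Times[OF _ A_sets A_sets])
       (unfold P_def', rule prob_space_imp_sigma_finite, rule prob_space_PiM, rule pM\<phi>)
  finally show ?thesis unfolding Q_def S_def K_def P_def A_def .
qed



theorem lemma4p2:
  fixes n k :: nat and \<delta> :: real
  assumes "n \<ge> 2" and "0 < k" and "k < n" and "\<delta> > 0"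
  shows "R_ratio TYPE('m::finite) n k \<delta>
           \<le> (1 - (rho n k)\<^sup>2) powr (- (real CARD('m) * (real CARD('m) + 1) / 4))
             * exp (\<bar>rho n k\<bar> * real CARD('m) * \<delta>\<^sup>2)"
proof -
  define r where "r = rho n k"
  define P where "P = (goe_law :: ('m set \<Rightarrow> real) measure)"
  define Q where "Q = (corr_goe_law r :: ('m set \<Rightarrow> real \<times> real) measure)"
  define A where "A = {g \<in> space P. spec_norm (sym_mat g) \<le> \<delta>}"
  define S where "S = {g \<in> space Q. spec_norm (sym_mat (fst \<circ> g)) \<le> \<delta> \<and> spec_norm (sym_mat (snd \<circ> g)) \<le> \<delta>}"
  define K where "K = (1 - r\<^sup>2) powr (- real (card (sym_pairs :: 'm set set)) / 2) * exp (\<bar>r\<bar> * real CARD('m) * \<delta>\<^sup>2)"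
  define B where "B = (1 - r\<^sup>2) powr (- (real CARD('m) * (real CARD('m) + 1) / 4)) * exp (\<bar>r\<bar> * real CARD('m) * \<delta>\<^sup>2)"
  have r: "\<bar>r\<bar> < 1"
  proof -
    have n0: "real n > 0" using assms by simp
    have "0 < 2 * real k / real n" using assms n0 by simp
    moreover have "2 * real k / real n < 2" using assms n0 by (simp add: divide_less_eq)
    ultimately show ?thesis unfolding r_def rho_def by linarith
  qed
  have d: "0 < 1 - r\<^sup>2" using r by (simp add: abs_square_less_1)
  have B0: "0 \<le> B" unfolding B_def by simp
  have KB: "K \<le> B"
  proof -
    have c: "2 * card (sym_pairs :: 'm set set) \<le> CARD('m) * (CARD('m) + 1)" by (rule card_sym_pairs)
    have "2 * real (card (sym_pairs :: 'm set set)) \<le> real CARD('m) * (real CARD('m) + 1)"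
    proof -
      have "real (2 * card (sym_pairs :: 'm set set)) \<le> real (CARD('m) * (CARD('m) + 1))"
        using c by (rule of_nat_mono)
      then show ?thesis by (simp add: algebra_simps)
    qed
    then have "- (real CARD('m) * (real CARD('m) + 1) / 4) \<le> - real (card (sym_pairs :: 'm set set)) / 2"
      by simp
    then have "(1 - r\<^sup>2) powr (- real (card (sym_pairs :: 'm set set)) / 2)
        \<le> (1 - r\<^sup>2) powr (- (real CARD('m) * (real CARD('m) + 1) / 4))"
      using d by (intro powr_mono') (auto simp: power2_eq_square)
    then show ?thesis unfolding K_def B_def by (intro mult_right_mono) auto
  qed
  have gvpos: "0 < sqrt (goe_var p)" for p :: "'m set" using goe_var_ge1[of p] by simp
  have pP: "prob_space P" unfolding P_def goe_law_def
    by (rule prob_space_PiM, rule prob_space_normal_density, rule gvpos)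
  have goal: "measure Q S / (measure P A)\<^sup>2 \<le> B"
  proof (cases "A \<in> sets P \<and> S \<in> sets Q")
    case False
    then have "A \<notin> sets P \<or> S \<notin> sets Q" by blast
    then show ?thesis
    proof
      assume "A \<notin> sets P" then have "measure P A = 0" by (rule measure_notin_sets)
      then show ?thesis using B0 by simp
    next
      assume "S \<notin> sets Q" then have "measure Q S = 0" by (rule measure_notin_sets)
      then show ?thesis using B0 by simp
    qed
  next
    case True
    have key: "emeasure Q S \<le> ennreal K * (emeasure P A * emeasure P A)"
      using key_emeasure[OF r, of \<delta>] True unfolding Q_def S_def K_def P_def A_def by blast
    have eA: "emeasure P A = ennreal (measure P A)" proof -
      interpret PP: prob_space P by (rule pP)
      show ?thesis by (rule PP.emeasure_eq_measure)
    qed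
    have K0: "0 \<le> K" unfolding K_def by simp
    have a0: "0 \<le> measure P A" by simp
    have QS: "emeasure Q S \<le> ennreal (K * (measure P A)\<^sup>2)"
      using key unfolding eA using K0 a0
      by (simp add: ennreal_mult'[symmetric] ennreal_mult[symmetric] power2_eq_square mult.assoc)
    then have fin: "emeasure Q S \<noteq> \<top>" by (auto simp: top_unique)
    then have "ennreal (measure Q S) \<le> ennreal (K * (measure P A)\<^sup>2)"
      using QS by (simp add: emeasure_eq_ennreal_measure)
    then have b: "measure Q S \<le> K * (measure P A)\<^sup>2"
      using K0 by (simp add: ennreal_le_iff)
    show ?thesis
    proof (cases "measure P A = 0")
      case True then show ?thesis using B0 by simp
    next
      case False
      then have "0 < (measure P A)\<^sup>2" by simp
      then have "measure Q S / (measure P A)\<^sup>2 \<le> K" using b by (simp add: divide_le_eq)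
      then show ?thesis using KB by linarith
    qed
  qed
  show ?thesis using goal unfolding R_ratio_def B_def P_def Q_def A_def S_def r_def .
qed

end
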